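(* Let $\lambda>0$, $\mu\in(0,\tfrac15]$ (the paper writes $\mu=\iota^3$) and $A>0$. Set $$\gamma_1:=\frac12\min\Big\{\frac{8\lambda}{5(3+800\lambda)},\ \frac1{1500},\ \frac{1}{27(13\lambda+12)(10\lambda+\mu+9)^2}\Big\},\qquad \gamma_2:=\max\{8\lambda+1+\gamma_1,\ 4\lambda+6+\gamma_1\}.$$ Let $Z_0,\dots,Z_7\in\mathbb{R}$ with $\sum_{\ell=0}^7|Z_\ell|<\gamma_1$, and let $\mathfrak B=\frac1A M$ where $$M=\begin{pmatrix}4\lambda+Z_1 & Z_2 & \frac{2(3-8\mu)}{15}-4\lambda+Z_3 & Z_4 & 0\\ 0 & \frac{25}{36}+Z_0 & 0&0&0\\ -\frac{2(3-8\mu)}{15}-4\lambda & 0 & 4\lambda+\frac{2(3-8\mu)}{15} & 0 & 0\\ 0 & \frac{2(1-\mu)}{3} & -\frac{2(1-\mu)}{5}+Z_5 & 4\lambda+4+Z_6 & 2\mu\\ 0&0& -\frac{(3\mu+2)^2}{6(10\lambda+\mu+9)} & \frac43+Z_7 & \frac{(3\mu+2)^2}{2(10\lambda+\mu+9)}\end{pmatrix}.$$ Then for every nonzero $\eta\in\mathbb{R}^5$, $$\frac{\gamma_1}{A}\,\eta^T\eta<\eta^T\mathfrak B\eta<\frac{\gamma_2}{A}\,\eta^T\eta .$$ *)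

theory Defs
  imports "HOL-Analysis.Analysis"
begin

definition gamma1 :: "real \<Rightarrow> real \<Rightarrow> real" where
  "gamma1 lam mu = (1/2) * Min {8*lam / (5*(3 + 800*lam)), 1/1500,
      1 / (27*(13*lam + 12)*(10*lam + mu + 9)^2)}"

definition gamma2 :: "real \<Rightarrow> real \<Rightarrow> real" where
  "gamma2 lam mu = max (8*lam + 1 + gamma1 lam mu) (4*lam + 6 + gamma1 lam mu)"

definition Mmat :: "real \<Rightarrow> real \<Rightarrow> (nat \<Rightarrow> real) \<Rightarrow> nat \<Rightarrow> nat \<Rightarrow> real" where
  "Mmat lam mu Z i j =
    (let c = 2*(3 - 8*mu)/15; d = 10*lam + mu + 9 in
     if i = 0 then [4*lam + Z 1, Z 2, c - 4*lam + Z 3, Z 4, 0] ! j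
     else if i = 1 then [0, 25/36 + Z 0, 0, 0, 0] ! j
     else if i = 2 then [- c - 4*lam, 0, 4*lam + c, 0, 0] ! j
     else if i = 3 then [0, 2*(1-mu)/3, - 2*(1-mu)/5 + Z 5, 4*lam + 4 + Z 6, 2*mu] ! j
     else if i = 4 then [0, 0, - (((3*mu+2)^2) / (6*d)), 4/3 + Z 7, ((3*mu+2)^2) / (2*d)] ! j
     else 0)"

definition quadform :: "(nat \<Rightarrow> nat \<Rightarrow> real) \<Rightarrow> (nat \<Rightarrow> real) \<Rightarrow> real" where
  "quadform B eta = (\<Sum>i<5. \<Sum>j<5. eta i * B i j * eta j)"

end

theory Submission
  imports Defs
begin


lemma quad_div: "quadform (\<lambda>i j. B i j / A) eta = quadform B eta / A"
  unfolding quadform_def by (simp add: sum_divide_distrib)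

lemma quad_generic: "quadform B eta = (\<Sum>i\<in>{0,1,2,3,4::nat}. \<Sum>j\<in>{0,1,2,3,4::nat}. eta i * B i j * eta j)"
  unfolding quadform_def by (simp add: eval_nat_numeral lessThan_Suc insert_commute)

lemma quad_M:
  fixes lam mu :: real
  defines "c \<equiv> 2*(3 - 8*mu)/15" and "h \<equiv> (3*mu+2)^2/(6*(10*lam + mu + 9))"
    and "k \<equiv> (3*mu+2)^2/(2*(10*lam + mu + 9))"
  shows "quadform (Mmat lam mu Z) eta =
   (4*lam*eta 0^2 - 8*lam*eta 0*eta 2 + (4*lam+c)*eta 2^2 + 25/36*eta 1^2 + (2*(1-mu)/3)*eta 1*eta 3
    - (2*(1-mu)/5)*eta 2*eta 3 + (4*lam+4)*eta 3^2 + (2*mu+4/3)*eta 3*eta 4 - h*eta 2*eta 4 + k*eta 4^2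
    + (Z 1*eta 0^2 + Z 2*eta 0*eta 1 + Z 3*eta 0*eta 2 + Z 4*eta 0*eta 3 + Z 0*eta 1^2 + Z 5*eta 2*eta 3 + Z 6*eta 3^2 + Z 7*eta 3*eta 4))"
proof -
  have e: "Mmat lam mu Z 0 0 = 4*lam + Z 1" "Mmat lam mu Z 0 1 = Z 2" "Mmat lam mu Z 0 2 = c - 4*lam + Z 3"
    "Mmat lam mu Z 0 3 = Z 4" "Mmat lam mu Z 0 4 = 0"
    "Mmat lam mu Z 1 0 = 0" "Mmat lam mu Z 1 1 = 25/36 + Z 0" "Mmat lam mu Z 1 2 = 0"
    "Mmat lam mu Z 1 3 = 0" "Mmat lam mu Z 1 4 = 0"
    "Mmat lam mu Z 2 0 = -c - 4*lam" "Mmat lam mu Z 2 1 = 0" "Mmat lam mu Z 2 2 = 4*lam + c"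
    "Mmat lam mu Z 2 3 = 0" "Mmat lam mu Z 2 4 = 0"
    "Mmat lam mu Z 3 0 = 0" "Mmat lam mu Z 3 1 = 2*(1-mu)/3" "Mmat lam mu Z 3 2 = - 2*(1-mu)/5 + Z 5"
    "Mmat lam mu Z 3 3 = 4*lam + 4 + Z 6" "Mmat lam mu Z 3 4 = 2*mu"
    "Mmat lam mu Z 4 0 = 0" "Mmat lam mu Z 4 1 = 0" "Mmat lam mu Z 4 2 = -h"
    "Mmat lam mu Z 4 3 = 4/3 + Z 7" "Mmat lam mu Z 4 4 = k"
    unfolding Mmat_def Let_def c_def h_def k_def by (simp_all add: eval_nat_numeral)
  show ?thesis unfolding quad_generic
    apply (simp add: e e[unfolded One_nat_def] algebra_simps power2_eq_square)
    by (simp add: field_simps)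
qed

lemma sumZ: "(\<Sum>l\<le>7. \<bar>Z l\<bar>) = \<bar>Z 0\<bar> + \<bar>Z 1\<bar> + \<bar>Z 2\<bar> + \<bar>Z 3\<bar> + \<bar>Z 4\<bar> + \<bar>Z 5\<bar> + \<bar>Z 6\<bar> + \<bar>Z (7::nat)\<bar>"
  by (simp add: eval_nat_numeral atMost_Suc ac_simps)

lemma sumS: "(\<Sum>i<5. eta i ^ 2) = eta 0^2 + eta 1^2 + eta 2^2 + eta 3^2 + (eta (4::nat)::real)^2"
  by (simp add: eval_nat_numeral lessThan_Suc)

lemma g1: "gamma1 lam mu = (1/2) * min (8*lam / (5*(3 + 800*lam))) (min (1/1500)
      (1 / (27*(13*lam + 12)*(10*lam + mu + 9)^2)))"
  unfolding gamma1_def by simp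


lemma psd2:
  fixes p q r x y :: real
  assumes "0 \<le> p" "0 \<le> q" "r^2 \<le> 4*p*q"
  shows "0 \<le> p*x^2 + r*x*y + q*y^2"
proof (cases "p = 0")
  case True
  then have "r^2 \<le> 0" using assms by simp
  then have "r = 0" by (metis le_less_trans not_less power2_less_0 zero_less_power2)
  then show ?thesis using True assms by simp
next
  case False
  then have pp: "p > 0" using assms by simp
  have "4*p*(p*x^2 + r*x*y + q*y^2) = (2*p*x + r*y)^2 + (4*p*q - r^2)*y^2"
    by (simp add: algebra_simps power2_eq_square)
  also have "\<dots> \<ge> 0" using assms by simp
  finally show ?thesis using pp by (simp add: zero_le_mult_iff)
qed

lemma lower:
  fixes lam mu m x0 x1 x2 x3 x4 :: real
  assumes lam: "lam > 0" and mu: "0 < mu" "mu \<le> 1/5" and m: "m > 0"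
    and m1: "m \<le> 8*lam/(5*(3+800*lam))" and m2: "m \<le> 1/1500"
    and m3: "m \<le> 1/(27*(13*lam+12)*(10*lam+mu+9)^2)"
  defines "c \<equiv> 2*(3 - 8*mu)/15" and "h \<equiv> (3*mu+2)^2/(6*(10*lam + mu + 9))"
    and "k \<equiv> (3*mu+2)^2/(2*(10*lam + mu + 9))"
  shows "m*(x0^2+x1^2+x2^2+x3^2+x4^2) \<le>
    4*lam*x0^2 - 8*lam*x0*x2 + (4*lam+c)*x2^2 + 25/36*x1^2 + (2*(1-mu)/3)*x1*x3
    - (2*(1-mu)/5)*x2*x3 + (4*lam+4)*x3^2 + (2*mu+4/3)*x3*x4 - h*x2*x4 + k*x4^2"
proof -
  define d where "d = 10*lam + mu + 9"
  define e where "e = (3*mu+2)^2"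
  have d9: "d \<ge> 9" and dpos: "d > 0" and dub: "d \<le> 10*lam + 46/5" using lam mu by (auto simp: d_def)
  have e1: "2 \<le> 3*mu+2" "3*mu+2 \<le> 13/5" using mu by auto
  have e4: "e \<ge> 4" using power_mono[OF e1(1), of 2] unfolding e_def by simp
  have eub: "e \<le> 169/25" using power_mono[OF e1(2), of 2] using mu unfolding e_def by (simp add: power2_eq_square)
  have hk: "h = k/3" unfolding h_def k_def by (simp add: field_simps)
  have kd: "k = e/(2*d)" unfolding k_def e_def d_def by simp
  have kpos: "k > 0" using e4 dpos kd by simp
  have kub: "k \<le> 2/5"
  proof -
    have "e/(2*d) \<le> (169/25)/(2*9)" using eub d9 e4 by (intro frac_le) auto
    then show ?thesis using kd by simp
  qed
  have mA: "m*(2000*lam+1) \<le> 4*lam"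
  proof -
    have "m*(5*(3+800*lam)) \<le> 8*lam" using m1 lam by (simp add: pos_le_divide_eq mult.commute)
    then show ?thesis using m by (simp add: algebra_simps)
  qed
  have A: "0 \<le> (4*lam-m)*x0^2 + (-8*lam)*x0*x2 + (4*lam+1/500)*x2^2"
    apply (rule psd2)
    using mA lam m mult_pos_pos[OF lam m] by (auto simp: algebra_simps power2_eq_square)
  have B: "0 \<le> (25/36-m)*x1^2 + (2*(1-mu)/3)*x1*x3 + (1/5)*x3^2"
  proof (rule psd2)
    have "(2*(1-mu)/3)^2 \<le> (2/3)^2" using mu by (intro power_mono) auto
    then show "(2*(1-mu)/3)^2 \<le> 4*(25/36-m)*(1/5)" using m2 by (simp add: power2_eq_square)
  qed (use m2 in auto)
  have C: "0 \<le> (9/100)*x2^2 + (-(2*(1-mu)/5))*x2*x3 + (1/2)*x3^2"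
  proof (rule psd2)
    have "(-(2*(1-mu)/5))^2 \<le> (2/5)^2" unfolding power2_minus using mu by (intro power_mono) auto
    then show "(-(2*(1-mu)/5))^2 \<le> 4*(9/100)*(1/2)" by (simp add: power2_eq_square)
  qed auto
  define beta where "beta = c - 1/500 - m - 9/100"
  have cb: "c \<ge> 14/75" unfolding c_def using mu by simp
  have beta: "beta \<ge> 9/100" unfolding beta_def using cb m2 by simp
  have D: "0 \<le> beta*x2^2 + (-h)*x2*x4 + (k/4)*x4^2"
  proof (rule psd2)
    have "(-h)^2 = k*(k/9)" unfolding hk by (simp add: power2_eq_square)
    also have "\<dots> \<le> k * beta" using kub beta kpos by (intro mult_left_mono) auto
    finally show "(-h)^2 \<le> 4*beta*(k/4)" by (simp add: mult.commute)
  qed (use beta kpos in auto)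
  define delta where "delta = 4*lam + 33/10 - m"
  define zeta where "zeta = 3*k/4 - m"
  have md: "m*(13*lam+12) \<le> 1/2187"
  proof -
    have P: "0 < 27*(13*lam+12)*d^2" using lam dpos by simp
    have "m \<le> 1/(27*(13*lam+12)*d^2)" using m3 by (simp add: d_def)
    then have "m*(27*(13*lam+12)*d^2) \<le> 1" using P by (simp add: le_divide_eq)
    moreover have "m*(27*(13*lam+12)*81) \<le> m*(27*(13*lam+12)*d^2)"
      using m lam d9 by (intro mult_left_mono) (auto intro!: power_mono[of 9 d 2, simplified])
    ultimately show ?thesis by (simp add: algebra_simps)
  qed
  have E: "0 \<le> delta*x3^2 + (2*mu+4/3)*x3*x4 + zeta*x4^2"
  proof (rule psd2)
    have f2: "(2*mu+4/3)^2 = 4*e/9" unfolding e_def by (simp add: power2_eq_square algebra_simps)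
    have mdel: "m*delta \<le> 1/2187"
    proof -
      have "m*delta \<le> m*(13*lam+12)" using m lam unfolding delta_def by (intro mult_left_mono) auto
      then show ?thesis using md by simp
    qed
    have iden: "delta*zeta - e/9 = e*(28*lam + 171/10 - 27*m - 8*mu)/(72*d) - m*delta"
      unfolding zeta_def delta_def kd using dpos by (simp add: field_simps d_def)
    have "(28*lam+15)/(10*lam+46/5) \<ge> 1"
      using lam by (simp add: le_divide_eq)
    have frac: "e*(28*lam + 171/10 - 27*m - 8*mu)/(72*d) \<ge> 4*(28*lam+15)/(72*(10*lam+46/5))"
    proof (rule frac_le)
      have "28*lam+15 \<le> 28*lam+171/10-27*m-8*mu" using m2 mu by simp
      then show "4*(28*lam+15) \<le> e*(28*lam + 171/10 - 27*m - 8*mu)"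
        using e4 lam by (intro mult_mono) auto
    qed (use e4 m2 mu lam dub dpos in auto)
    have "4*(28*lam+15)/(72*(10*lam+46/5)) \<ge> 1/20" using lam by (simp add: le_divide_eq)
    then have "delta*zeta - e/9 \<ge> 0" using iden frac mdel by linarith
    then show "(2*mu+4/3)^2 \<le> 4*delta*zeta" using f2 by simp
  next
    show "0 \<le> delta" using lam m2 unfolding delta_def by simp
    have k2: "k \<ge> 4/(2*(10*lam+46/5))" unfolding kd using e4 dub dpos by (intro frac_le) auto
    have k3: "k*(10*lam+46/5) \<ge> 2" using k2 lam by (simp add: divide_le_eq algebra_simps)
    have "m*(10*lam+46/5) \<le> m*(13*lam+12)" using m lam by (intro mult_left_mono) auto
    moreover have "zeta*(10*lam+46/5) = 3/4*(k*(10*lam+46/5)) - m*(10*lam+46/5)"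
      unfolding zeta_def by (simp add: field_simps)
    ultimately have "zeta*(10*lam+46/5) \<ge> 0" using k3 md by linarith
    then show "0 \<le> zeta" using lam by (simp add: zero_le_mult_iff)
  qed
  have "4*lam*x0^2 - 8*lam*x0*x2 + (4*lam+c)*x2^2 + 25/36*x1^2 + (2*(1-mu)/3)*x1*x3
    - (2*(1-mu)/5)*x2*x3 + (4*lam+4)*x3^2 + (2*mu+4/3)*x3*x4 - h*x2*x4 + k*x4^2
    - m*(x0^2+x1^2+x2^2+x3^2+x4^2) =
    ((4*lam-m)*x0^2 + (-8*lam)*x0*x2 + (4*lam+1/500)*x2^2)
    + ((25/36-m)*x1^2 + (2*(1-mu)/3)*x1*x3 + (1/5)*x3^2)
    + ((9/100)*x2^2 + (-(2*(1-mu)/5))*x2*x3 + (1/2)*x3^2)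
    + (beta*x2^2 + (-h)*x2*x4 + (k/4)*x4^2)
    + (delta*x3^2 + (2*mu+4/3)*x3*x4 + zeta*x4^2)"
    unfolding beta_def delta_def zeta_def by (simp add: algebra_simps)
  then show ?thesis using A B C D E by linarith
qed
lemma upper:
  fixes lam mu G x0 x1 x2 x3 x4 :: real
  assumes lam: "lam > 0" and mu: "0 < mu" "mu \<le> 1/5"
    and G1: "G \<ge> 8*lam+1" and G2: "G \<ge> 4*lam+6"
  defines "c \<equiv> 2*(3 - 8*mu)/15" and "h \<equiv> (3*mu+2)^2/(6*(10*lam + mu + 9))"
    and "k \<equiv> (3*mu+2)^2/(2*(10*lam + mu + 9))"
  shows "4*lam*x0^2 - 8*lam*x0*x2 + (4*lam+c)*x2^2 + 25/36*x1^2 + (2*(1-mu)/3)*x1*x3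
    - (2*(1-mu)/5)*x2*x3 + (4*lam+4)*x3^2 + (2*mu+4/3)*x3*x4 - h*x2*x4 + k*x4^2
    \<le> G*(x0^2+x1^2+x2^2+x3^2+x4^2)"
proof -
  define d where "d = 10*lam + mu + 9"
  define e where "e = (3*mu+2)^2"
  define Gx where "Gx = G - 4*lam"
  have d9: "d \<ge> 9" and dpos: "d > 0" using lam mu by (auto simp: d_def)
  have e1: "2 \<le> 3*mu+2" "3*mu+2 \<le> 13/5" using mu by auto
  have e4: "e \<ge> 4" using power_mono[OF e1(1), of 2] unfolding e_def by simp
  have eub: "e \<le> 169/25" using power_mono[OF e1(2), of 2] using mu unfolding e_def by (simp add: power2_eq_square)
  have hk: "h = k/3" unfolding h_def k_def by (simp add: field_simps)
  have kd: "k = e/(2*d)" unfolding k_def e_def d_def by simp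
  have kpos: "k > 0" using e4 dpos kd by simp
  have kub: "k \<le> 2/5"
  proof -
    have "e/(2*d) \<le> (169/25)/(2*9)" using eub d9 e4 by (intro frac_le) auto
    then show ?thesis using kd by simp
  qed
  have c1: "c \<le> 2/5" "c \<ge> 0" unfolding c_def using mu by auto
  have Gx1: "Gx \<ge> 4*lam+1" and Gx2: "Gx \<ge> 6" using G1 G2 lam by (auto simp: Gx_def)
  have A: "0 \<le> Gx*x0^2 + (8*lam)*x0*x2 + (Gx - c - 2/5)*x2^2"
  proof (rule psd2)
    have "(4*lam)*(4*lam) \<le> Gx*(Gx - c - 2/5)" using Gx1 c1 lam by (intro mult_mono) auto
    then show "(8*lam)^2 \<le> 4*Gx*(Gx - c - 2/5)" by (simp add: power2_eq_square)
  qed (use Gx1 c1 lam in auto)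
  have B: "0 \<le> (Gx+4*lam-25/36)*x1^2 + (-(2*(1-mu)/3))*x1*x3 + (1/10)*x3^2"
  proof (rule psd2)
    have "(-(2*(1-mu)/3))^2 \<le> (2/3)^2" unfolding power2_minus using mu by (intro power_mono) auto
    then show "(-(2*(1-mu)/3))^2 \<le> 4*(Gx+4*lam-25/36)*(1/10)" using Gx2 lam by (simp add: power2_eq_square)
  qed (use Gx2 lam in auto)
  have C: "0 \<le> (1/5)*x2^2 + (2*(1-mu)/5)*x2*x3 + (1/5)*x3^2"
  proof (rule psd2)
    have "(2*(1-mu)/5)^2 \<le> (2/5)^2" using mu by (intro power_mono) auto
    then show "(2*(1-mu)/5)^2 \<le> 4*(1/5)*(1/5)" by (simp add: power2_eq_square)
  qed auto
  have D: "0 \<le> (1/5)*x2^2 + h*x2*x4 + (1/10)*x4^2"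
  proof (rule psd2)
    have "h^2 \<le> (2/15)^2" using kub kpos hk by (intro power_mono) auto
    then show "h^2 \<le> 4*(1/5)*(1/10)" by (simp add: power2_eq_square)
  qed auto
  have E: "0 \<le> (Gx - 43/10)*x3^2 + (-(2*mu+4/3))*x3*x4 + (Gx + 4*lam - k - 1/10)*x4^2"
  proof (rule psd2)
    have "(-(2*mu+4/3))^2 \<le> 2^2" unfolding power2_minus using mu by (intro power_mono) auto
    then have f4: "(-(2*mu+4/3))^2 \<le> 4" by simp
    define P where "P = (Gx - 43/10)*(Gx + 4*lam - k - 1/10)"
    have P1: "17/10 * (11/2) \<le> P" unfolding P_def
      using Gx2 lam kub by (intro mult_mono) auto
    have P2: "4*(Gx - 43/10)*(Gx + 4*lam - k - 1/10) = 4*P" by (simp add: P_def)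
    have P3: "4 \<le> 4*P" using P1 by linarith
    show "(-(2*mu+4/3))^2 \<le> 4*(Gx - 43/10)*(Gx + 4*lam - k - 1/10)"
      unfolding P2 using f4 P3 by (rule order_trans)
  qed (use Gx2 lam kub in auto)
  have "G*(x0^2+x1^2+x2^2+x3^2+x4^2) - (4*lam*x0^2 - 8*lam*x0*x2 + (4*lam+c)*x2^2 + 25/36*x1^2 + (2*(1-mu)/3)*x1*x3
    - (2*(1-mu)/5)*x2*x3 + (4*lam+4)*x3^2 + (2*mu+4/3)*x3*x4 - h*x2*x4 + k*x4^2) =
    (Gx*x0^2 + (8*lam)*x0*x2 + (Gx - c - 2/5)*x2^2)
    + ((Gx+4*lam-25/36)*x1^2 + (-(2*(1-mu)/3))*x1*x3 + (1/10)*x3^2)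
    + ((1/5)*x2^2 + (2*(1-mu)/5)*x2*x3 + (1/5)*x3^2)
    + ((1/5)*x2^2 + h*x2*x4 + (1/10)*x4^2)
    + ((Gx - 43/10)*x3^2 + (-(2*mu+4/3))*x3*x4 + (Gx + 4*lam - k - 1/10)*x4^2)"
    unfolding Gx_def by (simp add: field_simps)
  then show ?thesis using A B C D E by linarith
qed


lemma absprod: fixes x y S :: real assumes "x^2 + y^2 \<le> 2*S" shows "\<bar>x*y\<bar> \<le> S"
proof -
  have "0 \<le> (\<bar>x\<bar> - \<bar>y\<bar>)^2" by simp
  then have "2*\<bar>x*y\<bar> \<le> x^2 + y^2" by (simp add: power2_eq_square algebra_simps abs_mult)
  then show ?thesis using assms by simp
qed

lemma term_bd: fixes z x y S :: real assumes "x^2 + y^2 \<le> 2*S" shows "\<bar>z*x*y\<bar> \<le> \<bar>z\<bar>*S"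
proof -
  have "\<bar>z*x*y\<bar> = \<bar>z\<bar>*\<bar>x*y\<bar>" by (simp add: abs_mult)
  also have "\<dots> \<le> \<bar>z\<bar>*S" using absprod[OF assms] by (intro mult_left_mono) auto
  finally show ?thesis .
qed

lemma pert:
  fixes x0 x1 x2 x3 x4 :: real and Z :: "nat \<Rightarrow> real"
  defines "S \<equiv> x0^2+x1^2+x2^2+x3^2+x4^2"
  shows "\<bar>Z 1*x0^2 + Z 2*x0*x1 + Z 3*x0*x2 + Z 4*x0*x3 + Z 0*x1^2 + Z 5*x2*x3 + Z 6*x3^2 + Z 7*x3*x4\<bar>
     \<le> (\<bar>Z 0\<bar> + \<bar>Z 1\<bar> + \<bar>Z 2\<bar> + \<bar>Z 3\<bar> + \<bar>Z 4\<bar> + \<bar>Z 5\<bar> + \<bar>Z 6\<bar> + \<bar>Z 7\<bar>) * S"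
proof -
  have sq: "0 \<le> x0^2" "0 \<le> x1^2" "0 \<le> x2^2" "0 \<le> x3^2" "0 \<le> x4^2" by simp_all
  have t1: "\<bar>Z 1*x0*x0\<bar> \<le> \<bar>Z 1\<bar>*S" by (rule term_bd) (use sq in \<open>simp add: S_def\<close>)
  have t2: "\<bar>Z 2*x0*x1\<bar> \<le> \<bar>Z 2\<bar>*S" by (rule term_bd) (use sq in \<open>simp add: S_def\<close>)
  have t3: "\<bar>Z 3*x0*x2\<bar> \<le> \<bar>Z 3\<bar>*S" by (rule term_bd) (use sq in \<open>simp add: S_def\<close>)
  have t4: "\<bar>Z 4*x0*x3\<bar> \<le> \<bar>Z 4\<bar>*S" by (rule term_bd) (use sq in \<open>simp add: S_def\<close>)
  have t0: "\<bar>Z 0*x1*x1\<bar> \<le> \<bar>Z 0\<bar>*S" by (rule term_bd) (use sq in \<open>simp add: S_def\<close>)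
  have t5: "\<bar>Z 5*x2*x3\<bar> \<le> \<bar>Z 5\<bar>*S" by (rule term_bd) (use sq in \<open>simp add: S_def\<close>)
  have t6: "\<bar>Z 6*x3*x3\<bar> \<le> \<bar>Z 6\<bar>*S" by (rule term_bd) (use sq in \<open>simp add: S_def\<close>)
  have t7: "\<bar>Z 7*x3*x4\<bar> \<le> \<bar>Z 7\<bar>*S" by (rule term_bd) (use sq in \<open>simp add: S_def\<close>)
  have e: "Z 1*x0^2 = Z 1*x0*x0" "Z 0*x1^2 = Z 0*x1*x1" "Z 6*x3^2 = Z 6*x3*x3"
    by (simp_all add: power2_eq_square)
  have tri: "\<bar>a+b+c+d+e+f+g+h\<bar> \<le> \<bar>a\<bar>+\<bar>b\<bar>+\<bar>c\<bar>+\<bar>d\<bar>+\<bar>e\<bar>+\<bar>f\<bar>+\<bar>g\<bar>+\<bar>h\<bar>" for a b c d e f g h :: real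
  proof -
    have "\<bar>a+b\<bar> \<le> \<bar>a\<bar>+\<bar>b\<bar>" by (rule abs_triangle_ineq)
    moreover have "\<bar>a+b+c\<bar> \<le> \<bar>a+b\<bar>+\<bar>c\<bar>" by (rule abs_triangle_ineq)
    moreover have "\<bar>a+b+c+d\<bar> \<le> \<bar>a+b+c\<bar>+\<bar>d\<bar>" by (rule abs_triangle_ineq)
    moreover have "\<bar>a+b+c+d+e\<bar> \<le> \<bar>a+b+c+d\<bar>+\<bar>e\<bar>" by (rule abs_triangle_ineq)
    moreover have "\<bar>a+b+c+d+e+f\<bar> \<le> \<bar>a+b+c+d+e\<bar>+\<bar>f\<bar>" by (rule abs_triangle_ineq)
    moreover have "\<bar>a+b+c+d+e+f+g\<bar> \<le> \<bar>a+b+c+d+e+f\<bar>+\<bar>g\<bar>" by (rule abs_triangle_ineq)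
    moreover have "\<bar>a+b+c+d+e+f+g+h\<bar> \<le> \<bar>a+b+c+d+e+f+g\<bar>+\<bar>h\<bar>" by (rule abs_triangle_ineq)
    ultimately show ?thesis by linarith
  qed
  have "\<bar>Z 1*x0*x0 + Z 2*x0*x1 + Z 3*x0*x2 + Z 4*x0*x3 + Z 0*x1*x1 + Z 5*x2*x3 + Z 6*x3*x3 + Z 7*x3*x4\<bar>
     \<le> \<bar>Z 0\<bar>*S + \<bar>Z 1\<bar>*S + \<bar>Z 2\<bar>*S + \<bar>Z 3\<bar>*S + \<bar>Z 4\<bar>*S + \<bar>Z 5\<bar>*S + \<bar>Z 6\<bar>*S + \<bar>Z 7\<bar>*S"
    using tri[of "Z 1*x0*x0" "Z 2*x0*x1" "Z 3*x0*x2" "Z 4*x0*x3" "Z 0*x1*x1" "Z 5*x2*x3" "Z 6*x3*x3" "Z 7*x3*x4"]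
      t0 t1 t2 t3 t4 t5 t6 t7 by linarith
  then show ?thesis unfolding e by (simp only: distrib_right)
qed

theorem lemmat:
  fixes lam mu A :: real and Z :: "nat \<Rightarrow> real" and eta :: "nat \<Rightarrow> real"
  assumes "lam > 0" and "0 < mu" and "mu \<le> 1/5" and "A > 0"
    and "(\<Sum>l\<le>7. \<bar>Z l\<bar>) < gamma1 lam mu"
    and "\<exists>i<5. eta i \<noteq> 0"
  shows "gamma1 lam mu / A * (\<Sum>i<5. eta i ^ 2)
           < quadform (\<lambda>i j. Mmat lam mu Z i j / A) eta
       \<and> quadform (\<lambda>i j. Mmat lam mu Z i j / A) eta
           < gamma2 lam mu / A * (\<Sum>i<5. eta i ^ 2)"
proof -
  note lam = assms(1) and mu = assms(2,3) and Apos = assms(4)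
  define S where "S = eta 0^2 + eta 1^2 + eta 2^2 + eta 3^2 + eta 4^2"
  have SS: "(\<Sum>i<5. eta i ^ 2) = S" unfolding S_def by (rule sumS)
  have Spos: "S > 0"
  proof -
    obtain i where i: "i < 5" "eta i \<noteq> 0" using assms(6) by blast
    have sq: "0 \<le> eta 0^2" "0 \<le> eta 1^2" "0 \<le> eta 2^2" "0 \<le> eta 3^2" "0 \<le> eta 4^2" by simp_all
    have "i = 0 \<or> i = 1 \<or> i = 2 \<or> i = 3 \<or> i = 4" using i by auto
    moreover have pi: "0 < eta i^2" using i by simp
    ultimately have "0 < eta 0^2 \<or> 0 < eta 1^2 \<or> 0 < eta 2^2 \<or> 0 < eta 3^2 \<or> 0 < eta 4^2" by auto
    then show ?thesis using sq unfolding S_def by linarith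
  qed
  define g where "g = gamma1 lam mu"
  define m where "m = 2*g"
  have mmin: "m = min (8*lam / (5*(3 + 800*lam))) (min (1/1500)
      (1 / (27*(13*lam + 12)*(10*lam + mu + 9)^2)))" unfolding m_def g_def g1 by simp
  have m1: "m \<le> 8*lam / (5*(3 + 800*lam))" and m2: "m \<le> 1/1500"
    and m3: "m \<le> 1 / (27*(13*lam + 12)*(10*lam + mu + 9)^2)" unfolding mmin by auto
  have "10*lam + mu + 9 > 0" using lam mu by simp
  then have mpos: "m > 0" unfolding mmin using lam by simp
  have gpos: "g > 0" using mpos m_def by simp
  define sZ where "sZ = \<bar>Z 0\<bar> + \<bar>Z 1\<bar> + \<bar>Z 2\<bar> + \<bar>Z 3\<bar> + \<bar>Z 4\<bar> + \<bar>Z 5\<bar> + \<bar>Z 6\<bar> + \<bar>Z 7\<bar>"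
  have sZ: "sZ < g" using assms(5) unfolding sumZ sZ_def g_def .
  define P where "P = Z 1*eta 0^2 + Z 2*eta 0*eta 1 + Z 3*eta 0*eta 2 + Z 4*eta 0*eta 3 + Z 0*eta 1^2 + Z 5*eta 2*eta 3 + Z 6*eta 3^2 + Z 7*eta 3*eta 4"
  have Pb: "\<bar>P\<bar> \<le> sZ * S" unfolding P_def sZ_def S_def by (rule pert)
  have sZS: "sZ * S < g * S" using sZ Spos by simp
  define Q where "Q = 4*lam*eta 0^2 - 8*lam*eta 0*eta 2 + (4*lam+2*(3 - 8*mu)/15)*eta 2^2 + 25/36*eta 1^2 + (2*(1-mu)/3)*eta 1*eta 3
    - (2*(1-mu)/5)*eta 2*eta 3 + (4*lam+4)*eta 3^2 + (2*mu+4/3)*eta 3*eta 4 - (3*mu+2)^2/(6*(10*lam + mu + 9))*eta 2*eta 4 + (3*mu+2)^2/(2*(10*lam + mu + 9))*eta 4^2"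
  have qf: "quadform (\<lambda>i j. Mmat lam mu Z i j / A) eta = (Q + P) / A"
    unfolding quad_div quad_M Q_def P_def by simp
  have low: "m * S \<le> Q" unfolding S_def Q_def by (rule lower[OF lam mu mpos m1 m2 m3])
  define G where "G = max (8*lam+1) (4*lam+6)"
  have up: "Q \<le> G * S" unfolding S_def Q_def by (rule upper[OF lam mu]) (auto simp: G_def)
  have g2: "gamma2 lam mu = G + g" unfolding gamma2_def G_def g_def by (simp add: max_add_distrib_right)
  have L: "g * S < Q + P" using low Pb sZS unfolding m_def by linarith
  have U: "Q + P < (G + g) * S" using up Pb sZS by (simp add: distrib_right)
  show ?thesis unfolding SS qf g2 g_def[symmetric]
    using L U Apos by (simp add: divide_strict_right_mono)
qed

end
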